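(* Assume $A$ is almost periodic and (H2) holds. Let $\theta=\sup_{n\in\mathbb{Z}}(t_{n+1}-t_n)$. Let $\varepsilon>0$, $\tau\in\Gamma_\varepsilon\cap T(A,\varepsilon)$ and $p\in P_\tau(\varepsilon)$. Then there is $K'>0$ such that for all $n\in\mathbb{Z}$: (a) $|X(t_{n+p+1},u+\tau)-X(t_{n+1},u)|\le K'\varepsilon$ for all $u\in[t_n,t_{n+1}]$; (b) $|X(t+\tau,t_{n+p})-X(t,t_n)|\le K'\varepsilon$ for all $t\in[t_n,t_{n+1}]$; (c) $|X(t+\tau,s+\tau)-X(t,s)|\le K'\varepsilon$ for all $s,t\in\mathbb{R}$ with $|t-s|\le\theta$; (d) $|X(t_{n+p+1},t_{n+p})-X(t_{n+1},t_n)|\le K'\varepsilon$.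
   Context: Let $q\in\mathbb{N}$; $|\cdot|$ is the Euclidean norm on finite-dimensional spaces (for matrices, of the array of entries). Fix a real sequence $(t_n)_{n\in\mathbb{Z}}$ with $t_n<t_{n+1}$ and $t_n\to\pm\infty$ as $n\to\pm\infty$; $t^{(k)}_n=t_{n+k}-t_n$. Let $A:\mathbb{R}\to M_q(\mathbb{C})$ be locally integrable, $X$ a fundamental matrix of $x'=A(t)x$, $X(t,s)=X(t)X(s)^{-1}$. A set is relatively dense if there is $l>0$ such that it meets every interval $[m,m+l]$. A continuous $g$ is almost periodic if for every $\varepsilon>0$ the set $T(g,\varepsilon)=\{\tau\in\mathbb{R}:|g(t+\tau)-g(t)|\le\varepsilon\ \forall t\in\mathbb{R}\}$ is relatively dense. (H2): for every $\varepsilon>0$ the set $\bigcap_{k\in\mathbb{N}}\{T\in\mathbb{Z}:|t^{(k)}_{T+n}-t^{(k)}_n|\le\varepsilon\ \forall n\in\mathbb{Z}\}$ is relatively dense. For $\varepsilon>0$, $\Gamma_\varepsilon$ is the set of $r\in\mathbb{R}$ for which there is $k\in\mathbb{Z}$ with $\sup_{n\in\mathbb{Z}}|t^{(k)}_n-r|\le\varepsilon$, and for $r\in\mathbb{R}$, $P_r(\varepsilon)$ is the set of all $k\in\mathbb{Z}$ with $\sup_{n\in\mathbb{Z}}|t^{(k)}_n-r|\le\varepsilon$. *)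

theory Defs
  imports "HOL-Analysis.Analysis"
begin

text \<open>Matrices in M_q(C) are rendered as complex ^'q ^'q; the library norm on this type
  is the Euclidean (Frobenius) norm of the array of entries.\<close>

definition rel_dense :: "real set \<Rightarrow> bool" where
  "rel_dense S \<longleftrightarrow> (\<exists>l>0. \<forall>m::real. \<exists>x\<in>S. m \<le> x \<and> x \<le> m + l)"

definition eps_periods :: "(real \<Rightarrow> 'a::real_normed_vector) \<Rightarrow> real \<Rightarrow> real set" where
  "eps_periods g \<epsilon> = {\<tau>. \<forall>t. norm (g (t + \<tau>) - g t) \<le> \<epsilon>}"

definition almost_periodic :: "(real \<Rightarrow> 'a::real_normed_vector) \<Rightarrow> bool" where
  "almost_periodic g \<longleftrightarrow> continuous_on UNIV g \<and> (\<forall>\<epsilon>>0. rel_dense (eps_periods g \<epsilon>))"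

definition tk :: "(int \<Rightarrow> real) \<Rightarrow> int \<Rightarrow> int \<Rightarrow> real" where
  "tk t k n = t (n + k) - t n"

definition H2 :: "(int \<Rightarrow> real) \<Rightarrow> bool" where
  "H2 t \<longleftrightarrow> (\<forall>\<epsilon>>0. rel_dense (of_int ` (\<Inter>k::nat.
      {T::int. \<forall>n. \<bar>tk t (int k) (T + n) - tk t (int k) n\<bar> \<le> \<epsilon>})))"

definition Gamma_set :: "(int \<Rightarrow> real) \<Rightarrow> real \<Rightarrow> real set" where
  "Gamma_set t \<epsilon> = {r. \<exists>k::int. \<forall>n. \<bar>tk t k n - r\<bar> \<le> \<epsilon>}"

definition P_set :: "(int \<Rightarrow> real) \<Rightarrow> real \<Rightarrow> real \<Rightarrow> int set" where
  "P_set t r \<epsilon> = {k. \<forall>n. \<bar>tk t k n - r\<bar> \<le> \<epsilon>}"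

definition locally_integrable :: "(real \<Rightarrow> 'a::euclidean_space) \<Rightarrow> bool" where
  "locally_integrable A \<longleftrightarrow> (\<forall>a b. A integrable_on {a..b})"

text \<open>Fundamental matrix of x' = A(t) x (Caratheodory sense, integral form):
  X is continuous, invertible everywhere, and X b - X a = integral of A X over [a,b].\<close>
definition fundamental_matrix ::
  "(real \<Rightarrow> complex^'q^'q) \<Rightarrow> (real \<Rightarrow> complex^'q^'q) \<Rightarrow> bool" where
  "fundamental_matrix A X \<longleftrightarrow> continuous_on UNIV X \<and> (\<forall>t. invertible (X t)) \<and>
     (\<forall>a b. a \<le> b \<longrightarrow> ((\<lambda>s. A s ** X s) has_integral (X b - X a)) {a..b})"

definition transition :: "(real \<Rightarrow> complex^'q^'q) \<Rightarrow> real \<Rightarrow> real \<Rightarrow> complex^'q^'q" where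
  "transition X t s = X t ** matrix_inv (X s)"

end

theory Submission imports Defs begin
lemma norm_le_l1_gen: "norm (x::'a::real_normed_vector^'n) \<le> (\<Sum>i\<in>UNIV. norm (x$i))"
  by (simp add: norm_vec_def L2_set_le_sum)

lemma mm_norm:
  fixes A B :: "complex^'q^'q"
  shows "norm (A ** B) \<le> real (CARD('q))^3 * (norm A * norm B)"
proof -
  have "norm (A ** B) \<le> (\<Sum>i\<in>UNIV. norm ((A ** B)$i))" by (rule norm_le_l1_gen)
  also have "\<dots> \<le> (\<Sum>i\<in>(UNIV::'q set). \<Sum>j\<in>(UNIV::'q set). norm ((A ** B)$i$j))"
    by (intro sum_mono norm_le_l1_gen)
  also have "\<dots> \<le> (\<Sum>i\<in>(UNIV::'q set). \<Sum>j\<in>(UNIV::'q set). \<Sum>k\<in>(UNIV::'q set). norm A * norm B)"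
  proof (intro sum_mono)
    fix i j
    have "norm ((A ** B)$i$j) = norm (\<Sum>k\<in>UNIV. A$i$k * B$k$j)"
      by (simp add: matrix_matrix_mult_def)
    also have "\<dots> \<le> (\<Sum>k\<in>UNIV. norm (A$i$k * B$k$j))" by (rule norm_sum)
    also have "\<dots> \<le> (\<Sum>k\<in>(UNIV::'q set). norm A * norm B)"
    proof (intro sum_mono)
      fix k
      have "norm (A$i$k) \<le> norm A" by (rule order_trans[OF Finite_Cartesian_Product.norm_nth_le Finite_Cartesian_Product.norm_nth_le])
      moreover have "norm (B$k$j) \<le> norm B" by (rule order_trans[OF Finite_Cartesian_Product.norm_nth_le Finite_Cartesian_Product.norm_nth_le])
      ultimately show "norm (A$i$k * B$k$j) \<le> norm A * norm B"
        by (simp add: norm_mult mult_mono)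
    qed
    finally show "norm ((A ** B)$i$j) \<le> (\<Sum>k\<in>(UNIV::'q set). norm A * norm B)" .
  qed
  also have "\<dots> = real (CARD('q))^3 * (norm A * norm B)"
    by (simp add: power3_eq_cube)
  finally show ?thesis .
qed

lemma mat_add_rd: "((A::complex^'q^'q) + B) ** C = A ** C + B ** C"
  by (simp add: vec_eq_iff matrix_matrix_mult_def sum.distrib distrib_right)
lemma mat_diff_rd: "((A::complex^'q^'q) - B) ** C = A ** C - B ** C"
  by (simp add: vec_eq_iff matrix_matrix_mult_def sum_subtractf left_diff_distrib)
lemma mat_diff_ld: "(C::complex^'q^'q) ** (A - B) = C ** A - C ** B"
  by (simp add: vec_eq_iff matrix_matrix_mult_def sum_subtractf right_diff_distrib)

lemma bl_rmult: fixes P :: "complex^'q^'q" shows "bounded_linear (\<lambda>x::complex^'q^'q. x ** P)"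
proof (rule bounded_linear_intro[where K="real (CARD('q))^3 * norm P"])
  fix x y :: "complex^'q^'q" and r :: real
  show "(x + y) ** P = x ** P + y ** P"
    by (rule mat_add_rd)
  show "(r *\<^sub>R x) ** P = r *\<^sub>R (x ** P)"
    by (simp add: vec_eq_iff, intro allI) (simp add: matrix_matrix_mult_def scaleR_sum_right)
  show "norm (x ** P) \<le> norm x * (real (CARD('q))^3 * norm P)"
    using mm_norm[of x P] by (simp add: algebra_simps)
qed

lemma bl_lmult: fixes P :: "complex^'q^'q" shows "bounded_linear (\<lambda>x::complex^'q^'q. P ** x)"
proof (rule bounded_linear_intro[where K="real (CARD('q))^3 * norm P"])
  fix x y :: "complex^'q^'q" and r :: real
  show "P ** (x + y) = P ** x + P ** y"
    by (simp add: matrix_add_ldistrib)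
  show "P ** (r *\<^sub>R x) = r *\<^sub>R (P ** x)"
    by (simp add: vec_eq_iff, intro allI) (simp add: matrix_matrix_mult_def scaleR_sum_right)
  show "norm (P ** x) \<le> norm x * (real (CARD('q))^3 * norm P)"
    using mm_norm[of P x] by (simp add: algebra_simps)
qed


lemma fm_inv:
  assumes "fundamental_matrix A X"
  shows "X s ** matrix_inv (X s) = mat 1 \<and> matrix_inv (X s) ** X s = mat 1"
proof -
  have "invertible (X s)" using assms by (simp add: fundamental_matrix_def)
  then show ?thesis unfolding invertible_def matrix_inv_def by (rule someI_ex)
qed

lemma tr_id:
  assumes "fundamental_matrix A X" shows "transition X s s = mat 1"
  using fm_inv[OF assms] by (simp add: transition_def)

lemma tr_comp:
  assumes "fundamental_matrix A X"
  shows "transition X r m ** transition X m s = transition X r s"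
proof -
  have "transition X r m ** transition X m s
      = X r ** ((matrix_inv (X m) ** X m) ** matrix_inv (X s))"
    by (simp add: transition_def matrix_mul_assoc)
  also have "\<dots> = transition X r s" using fm_inv[OF assms, of m] by (simp add: transition_def)
  finally show ?thesis .
qed

lemma tr_int:
  assumes "fundamental_matrix A X" "a \<le> b"
  shows "((\<lambda>w. A w ** transition X w s) has_integral (transition X b s - transition X a s)) {a..b}"
proof -
  have "((\<lambda>w. A w ** X w) has_integral (X b - X a)) {a..b}"
    using assms by (simp add: fundamental_matrix_def)
  from has_integral_linear[OF this bl_rmult[of "matrix_inv (X s)"]]
  show ?thesis by (simp add: o_def transition_def matrix_mul_assoc mat_diff_rd)
qed

lemma tr_cont:
  assumes "fundamental_matrix A X"
  shows "continuous_on UNIV (\<lambda>v. transition X (v + c) s)"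
proof -
  have X: "continuous_on UNIV X" using assms by (simp add: fundamental_matrix_def)
  have "continuous_on UNIV (\<lambda>v. X (v + c))"
    by (rule continuous_on_compose2[OF X]) (auto intro!: continuous_intros)
  then show ?thesis unfolding transition_def
    by (rule bounded_linear.continuous_on[OF bl_rmult])
qed

lemma int_bound:
  fixes F f :: "real \<Rightarrow> 'a::real_normed_vector"
  assumes I: "\<And>a b. a \<le> b \<Longrightarrow> (f has_integral (F b - F a)) {a..b}"
    and B: "0 \<le> B" and fb: "\<And>w. min s v \<le> w \<Longrightarrow> w \<le> max s v \<Longrightarrow> norm (f w) \<le> B"
  shows "norm (F v - F s) \<le> B * \<bar>v - s\<bar>"
proof (cases "s \<le> v")
  case True
  have I': "(f has_integral (F v - F s)) (cbox s v)" using I[OF True] by simp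
  have *: "\<And>x. x \<in> cbox s v \<Longrightarrow> norm (f x) \<le> B" using fb True by auto
  from has_integral_bound[OF B I' *] True show ?thesis by simp
next
  case False
  have I': "(f has_integral (F s - F v)) (cbox v s)" using I[of v s] False by simp
  have *: "\<And>x. x \<in> cbox v s \<Longrightarrow> norm (f x) \<le> B" using fb False by auto
  from has_integral_bound[OF B I' *] False show ?thesis by (simp add: norm_minus_commute)
qed

lemma sup_trick:
  fixes G :: "real \<Rightarrow> 'a::real_normed_vector"
  assumes cont: "continuous_on UNIV G" and h: "0 \<le> h"
    and H: "\<And>S v. (\<forall>w\<in>{s-h..s+h}. norm (G w) \<le> S) \<Longrightarrow> v \<in> {s-h..s+h} \<Longrightarrow> norm (G v) \<le> \<alpha> + S/2"
  shows "\<forall>v\<in>{s-h..s+h}. norm (G v) \<le> 2*\<alpha>"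
proof -
  have "\<exists>x\<in>{s-h..s+h}. \<forall>y\<in>{s-h..s+h}. norm (G y) \<le> norm (G x)"
    by (rule continuous_attains_sup) (use h in \<open>auto intro!: continuous_intros continuous_on_subset[OF cont]\<close>)
  then obtain x where x: "x \<in> {s-h..s+h}" and mx: "\<forall>y\<in>{s-h..s+h}. norm (G y) \<le> norm (G x)" by blast
  have "norm (G x) \<le> \<alpha> + norm (G x) / 2" using H[OF mx x] .
  then have "norm (G x) \<le> 2*\<alpha>" by linarith
  then show ?thesis using mx by (meson order_trans)
qed

lemma ap_bounded:
  fixes g :: "real \<Rightarrow> 'a::real_normed_vector"
  assumes "almost_periodic g"
  shows "\<exists>M>0. \<forall>t. norm (g t) \<le> M"
proof -
  have cont: "continuous_on UNIV g" and rd: "rel_dense (eps_periods g 1)"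
    using assms by (auto simp: almost_periodic_def)
  obtain l where l: "l > 0" "\<And>m. \<exists>x\<in>eps_periods g 1. m \<le> x \<and> x \<le> m + l"
    using rd unfolding rel_dense_def by blast
  have "compact (g ` {0..l})"
    by (rule compact_continuous_image) (auto intro: continuous_on_subset[OF cont])
  then obtain B where B: "\<And>y. y \<in> g ` {0..l} \<Longrightarrow> norm y \<le> B"
    by (meson bounded_iff compact_imp_bounded)
  show ?thesis
  proof (intro exI[of _ "\<bar>B\<bar> + 1"] conjI allI)
    fix t
    obtain x where x: "x \<in> eps_periods g 1" "-t \<le> x" "x \<le> -t + l" using l(2)[of "-t"] by blast
    have "norm (g (t + x) - g t) \<le> 1" using x(1) by (simp add: eps_periods_def)
    moreover have "norm (g (t + x)) \<le> B" using B x by auto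
    ultimately show "norm (g t) \<le> \<bar>B\<bar> + 1" using norm_triangle_sub[of "g t" "g (t+x)"]
      by (simp add: norm_minus_commute)
  qed simp
qed

lemma gaps_bdd:
  assumes "H2 t"
  shows "bdd_above (range (\<lambda>n. t (n+1) - t n))"
proof -
  define S where "S = (\<Inter>k::nat. {T::int. \<forall>n. \<bar>tk t (int k) (T + n) - tk t (int k) n\<bar> \<le> 1})"
  have "rel_dense (of_int ` S)"
    using assms[unfolded H2_def, rule_format, of 1] by (simp add: S_def)
  then obtain l where l: "l > 0" and L: "\<forall>m. \<exists>x\<in>real_of_int ` S. m \<le> x \<and> x \<le> m + l"
    unfolding rel_dense_def by blast
  define Bd where "Bd = Max ((\<lambda>j. t (j+1) - t j) ` {0..\<lceil>l\<rceil>})"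
  show ?thesis unfolding bdd_above_def
  proof (intro exI[of _ "Bd + 1"] ballI, clarify)
    fix n
    obtain x where x: "x \<in> real_of_int ` S" "- real_of_int n \<le> x" "x \<le> - real_of_int n + l"
      using L by blast
    then obtain T where xT: "x = of_int T" and TS: "T \<in> S" by blast
    have T1: "\<forall>n. \<bar>tk t (int 1) (T + n) - tk t (int 1) n\<bar> \<le> 1"
      using TS unfolding S_def by blast
    have j: "T + n \<in> {0..\<lceil>l\<rceil>}" using x(2,3) xT by (auto, linarith)
    have "t (T+n+1) - t (T+n) \<le> Bd" unfolding Bd_def
      by (rule Max_ge) (use j in auto)
    moreover have "\<bar>(t (T+n+1) - t (T+n)) - (t (n+1) - t n)\<bar> \<le> 1"
      using T1[rule_format, of n] by (simp add: tk_def algebra_simps)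
    ultimately show "t (n+1) - t n \<le> Bd + 1" by linarith
  qed
qed

theorem lemma6:
  fixes t :: "int \<Rightarrow> real" and A X :: "real \<Rightarrow> complex^'q^'q"
    and \<epsilon> \<tau> :: real and p :: int
  assumes t_mono: "\<And>n. t n < t (n + 1)"
    and t_top: "filterlim t at_top at_top"
    and t_bot: "filterlim t at_bot at_bot"
    and A_li: "locally_integrable A"
    and A_ap: "almost_periodic A"
    and fund: "fundamental_matrix A X"
    and h2: "H2 t"
    and eps: "\<epsilon> > 0"
    and tau: "\<tau> \<in> Gamma_set t \<epsilon> \<inter> eps_periods A \<epsilon>"
    and p: "p \<in> P_set t \<tau> \<epsilon>"
  shows "\<exists>K'>0.
     (\<forall>n. (\<forall>u\<in>{t n..t (n+1)}.
              norm (transition X (t (n+p+1)) (u + \<tau>) - transition X (t (n+1)) u) \<le> K' * \<epsilon>)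
         \<and> (\<forall>s\<in>{t n..t (n+1)}.
              norm (transition X (s + \<tau>) (t (n+p)) - transition X s (t n)) \<le> K' * \<epsilon>)
         \<and> norm (transition X (t (n+p+1)) (t (n+p)) - transition X (t (n+1)) (t n)) \<le> K' * \<epsilon>)
   \<and> (\<forall>s r. \<bar>r - s\<bar> \<le> (SUP n. t (n+1) - t n) \<longrightarrow>
              norm (transition X (r + \<tau>) (s + \<tau>) - transition X r s) \<le> K' * \<epsilon>)"
proof -
  define T where "T = transition X"
  define c where "c = real (CARD('q))^3"
  define N1 where "N1 = norm (mat 1 :: complex^'q^'q)"
  have c1: "c \<ge> 1" unfolding c_def
    using finite_UNIV_card_ge_0[where 'a='q] by simp
  have N1: "N1 \<ge> 0" by (simp add: N1_def)
  have mm: "\<And>(P::complex^'q^'q) (Q::complex^'q^'q). norm (P ** Q) \<le> c * (norm P * norm Q)"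
    unfolding c_def using mm_norm by blast
  obtain M where M: "M > 0" "\<And>t. norm (A t) \<le> M" using ap_bounded[OF A_ap] by blast
  define h where "h = 1 / (2*c*M)"
  have h0: "h > 0" using c1 M by (simp add: h_def)
  have cMh: "c*M*h = 1/2" using c1 M by (simp add: h_def field_simps)
  have per: "\<And>w. norm (A (w+\<tau>) - A w) \<le> \<epsilon>" using tau by (simp add: eps_periods_def)
  have pP: "\<And>n. \<bar>t (n+p) - t n - \<tau>\<bar> \<le> \<epsilon>" using p by (simp add: P_set_def tk_def)
  have Tid: "\<And>s. T s s = mat 1" using tr_id[OF fund] by (simp add: T_def)
  have Tcomp: "\<And>r m s. T r m ** T m s = T r s" using tr_comp[OF fund] by (simp add: T_def)
  have Tint: "\<And>a b s. a \<le> b \<Longrightarrow> ((\<lambda>w. A w ** T w s) has_integral (T b s - T a s)) {a..b}"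
    using tr_int[OF fund] by (simp add: T_def)
  have Tcont: "\<And>c s. continuous_on UNIV (\<lambda>v. T (v + c) s)"
    using tr_cont[OF fund] by (simp add: T_def)
  have mmb: "\<And>(P::complex^'q^'q) (Q::complex^'q^'q). \<And>a b. norm P \<le> a \<Longrightarrow> norm Q \<le> b \<Longrightarrow> norm (P ** Q) \<le> c * (a * b)"
  proof -
    fix P Q :: "complex^'q^'q" and a b assume "norm P \<le> a" "norm Q \<le> b"
    then have "norm P * norm Q \<le> a * b" by (intro mult_mono) (auto intro: order_trans[OF norm_ge_zero])
    then have "c * (norm P * norm Q) \<le> c * (a * b)" using c1 by (intro mult_left_mono) auto
    then show "norm (P ** Q) \<le> c * (a * b)" using mm[of P Q] by linarith
  qed
  have S1: "\<And>s v. \<bar>v - s\<bar> \<le> h \<Longrightarrow> norm (T v s) \<le> 2*N1"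
  proof -
    fix s v :: real assume v: "\<bar>v - s\<bar> \<le> h"
    have "\<forall>v\<in>{s-h..s+h}. norm (T (v+0) s) \<le> 2*N1"
    proof (rule sup_trick[where G="\<lambda>v. T (v+0) s"])
      show "continuous_on UNIV (\<lambda>v. T (v+0) s)" by (rule Tcont)
      show "0 \<le> h" using h0 by simp
      fix S v assume HS: "\<forall>w\<in>{s-h..s+h}. norm (T (w+0) s) \<le> S" and v: "v \<in> {s-h..s+h}"
      have S0: "0 \<le> S" using HS h0 by (meson atLeastAtMost_iff le_add_same_cancel1 less_imp_le
           diff_le_eq norm_ge_zero order_trans)
      have "norm (T v s - T s s) \<le> (c*(M*S)) * \<bar>v - s\<bar>"
      proof (rule int_bound[where f="\<lambda>w. A w ** T w s"])
        show "\<And>a b. a \<le> b \<Longrightarrow> ((\<lambda>w. A w ** T w s) has_integral (T b s - T a s)) {a..b}"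
          by (rule Tint)
        show "0 \<le> c*(M*S)" using c1 M S0 by simp
        fix w assume "min s v \<le> w" "w \<le> max s v"
        then have "w \<in> {s-h..s+h}" using v by auto
        then have "norm (T w s) \<le> S" using HS by simp
        then show "norm (A w ** T w s) \<le> c*(M*S)" using mmb M(2) by blast
      qed
      moreover have "(c*(M*S)) * \<bar>v - s\<bar> \<le> (c*(M*S)) * h"
        using v c1 M S0 by (intro mult_left_mono) auto
      moreover have "(c*(M*S)) * h = S/2" using cMh by (simp add: algebra_simps)
      ultimately have "norm (T v s - mat 1) \<le> S/2" using Tid by simp
      then show "norm (T (v+0) s) \<le> N1 + S/2" using norm_triangle_sub[of "T v s" "mat 1"]
        unfolding N1_def by (simp add: norm_minus_commute)
    qed
    moreover have "v \<in> {s-h..s+h}" using v by (auto simp: abs_le_iff)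
    ultimately show "norm (T v s) \<le> 2*N1" by simp
  qed
  have S2: "\<And>k::nat. \<exists>B. \<forall>r s. \<bar>r - s\<bar> \<le> (real k + 1)*h \<longrightarrow> norm (T r s) \<le> B"
  proof -
    fix k :: nat
    show "\<exists>B. \<forall>r s. \<bar>r - s\<bar> \<le> (real k + 1)*h \<longrightarrow> norm (T r s) \<le> B"
    proof (induction k)
      case 0 show ?case using S1 by (intro exI[of _ "2*N1"]) auto
    next
      case (Suc k)
      then obtain B where B: "\<And>r s. \<bar>r - s\<bar> \<le> (real k + 1)*h \<Longrightarrow> norm (T r s) \<le> B" by blast
      show ?case
      proof (intro exI[of _ "c*(B*(2*N1))"] allI impI)
        fix r s assume rs: "\<bar>r - s\<bar> \<le> (real (Suc k) + 1)*h"
        define m where "m = s + (r-s)/(real k+2)"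
        have "m - s = (r-s)/(real k+2)" by (simp add: m_def)
        then have "\<bar>m - s\<bar> = \<bar>r-s\<bar>/(real k+2)" by simp
        also have "\<dots> \<le> ((real k+2)*h)/(real k+2)"
          using rs by (intro divide_right_mono) (auto simp: add.commute)
        finally have ms: "\<bar>m - s\<bar> \<le> h" by simp
        have "r - m = (r-s)*((real k+1)/(real k+2))" by (simp add: m_def field_simps)
        then have "\<bar>r - m\<bar> = \<bar>r-s\<bar>*((real k+1)/(real k+2))" by (simp add: abs_mult)
        also have "\<dots> \<le> ((real k+2)*h)*((real k+1)/(real k+2))"
          using rs by (intro mult_right_mono) (auto simp: add.commute)
        also have "\<dots> = (real k+1)*h" by (simp add: field_simps)
        finally have rm: "\<bar>r - m\<bar> \<le> (real k + 1)*h" .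
        have "norm (T r s) = norm (T r m ** T m s)" using Tcomp by simp
        also have "\<dots> \<le> c*(B*(2*N1))" using mmb B[OF rm] S1[OF ms] by blast
        finally show "norm (T r s) \<le> c*(B*(2*N1))" .
      qed
    qed
  qed
  have S3: "\<And>L. \<exists>C\<ge>0. \<forall>r s. \<bar>r - s\<bar> \<le> L \<longrightarrow> norm (T r s) \<le> C"
  proof -
    fix L :: real
    obtain B where B: "\<forall>r s. \<bar>r - s\<bar> \<le> (real (nat \<lceil>L/h\<rceil>) + 1)*h \<longrightarrow> norm (T r s) \<le> B"
      using S2 by blast
    have "L \<le> (real (nat \<lceil>L/h\<rceil>) + 1)*h"
    proof -
      have "L/h \<le> real (nat \<lceil>L/h\<rceil>) + 1" by linarith
      then show ?thesis using h0 by (simp add: divide_le_eq)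
    qed
    then show "\<exists>C\<ge>0. \<forall>r s. \<bar>r - s\<bar> \<le> L \<longrightarrow> norm (T r s) \<le> C"
    proof (intro exI[of _ "max B 0"] conjI allI impI)
      fix r s assume "\<bar>r - s\<bar> \<le> L"
      with \<open>L \<le> _\<close> have "\<bar>r - s\<bar> \<le> (real (nat \<lceil>L/h\<rceil>) + 1)*h" by linarith
      then show "norm (T r s) \<le> max B 0" using B by fastforce
    qed simp
  qed
  define D where "D r s = T (r+\<tau>) (s+\<tau>) - T r s" for r s
  have D1: "\<And>s v. \<bar>v - s\<bar> \<le> h \<Longrightarrow> norm (D v s) \<le> 2*(c*(\<epsilon>*(2*N1))*h)"
  proof -
    fix s v :: real assume v: "\<bar>v - s\<bar> \<le> h"
    have "\<forall>v\<in>{s-h..s+h}. norm (T (v+\<tau>) (s+\<tau>) - T (v+0) s) \<le> 2*(c*(\<epsilon>*(2*N1))*h)"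
    proof (rule sup_trick[where G="\<lambda>v. T (v+\<tau>) (s+\<tau>) - T (v+0) s"])
      show "continuous_on UNIV (\<lambda>v. T (v+\<tau>) (s+\<tau>) - T (v+0) s)"
        by (intro continuous_on_diff Tcont)
      show "0 \<le> h" using h0 by simp
      fix S v assume HS: "\<forall>w\<in>{s-h..s+h}. norm (T (w+\<tau>) (s+\<tau>) - T (w+0) s) \<le> S"
        and v: "v \<in> {s-h..s+h}"
      have S0: "0 \<le> S" using HS h0 by (meson atLeastAtMost_iff le_add_same_cancel1 less_imp_le
           diff_le_eq norm_ge_zero order_trans)
      have "norm (D v s - D s s) \<le> (c*(M*S) + c*(\<epsilon>*(2*N1))) * \<bar>v - s\<bar>"
      proof (rule int_bound[where f="\<lambda>w. A (w+\<tau>) ** T (w+\<tau>) (s+\<tau>) - A w ** T w s"])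
        fix a b :: real assume ab: "a \<le> b"
        have i1: "((\<lambda>w. A w ** T w (s+\<tau>)) has_integral (T (b+\<tau>) (s+\<tau>) - T (a+\<tau>) (s+\<tau>))) {a+\<tau>..b+\<tau>}"
          using ab by (intro Tint) simp
        have i1': "((\<lambda>w. A (w+\<tau>) ** T (w+\<tau>) (s+\<tau>)) has_integral (T (b+\<tau>) (s+\<tau>) - T (a+\<tau>) (s+\<tau>))) {a..b}"
          using has_integral_shift_Icc_real[of "\<lambda>w. A w ** T w (s+\<tau>)" \<tau> _ a b] i1
          by (simp add: o_def add.commute)
        show "((\<lambda>w. A (w+\<tau>) ** T (w+\<tau>) (s+\<tau>) - A w ** T w s) has_integral (D b s - D a s)) {a..b}"
          using has_integral_diff[OF i1' Tint[OF ab, of s]] by (simp add: D_def algebra_simps)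
      next
        show "0 \<le> c*(M*S) + c*(\<epsilon>*(2*N1))" using c1 M S0 eps N1 by simp
      next
        fix w assume "min s v \<le> w" "w \<le> max s v"
        then have w: "w \<in> {s-h..s+h}" using v by auto
        then have nS: "norm (D w s) \<le> S" using HS by (simp add: D_def)
        have w1: "\<bar>w - s\<bar> \<le> h" using w by (auto simp: abs_le_iff)
        have eq: "A (w+\<tau>) ** T (w+\<tau>) (s+\<tau>) - A w ** T w s
            = A (w+\<tau>) ** D w s + (A (w+\<tau>) - A w) ** T w s"
          by (simp add: D_def mat_diff_ld mat_diff_rd)
        have "norm (A (w+\<tau>) ** D w s) \<le> c*(M*S)" using mmb M(2) nS by blast
        moreover have "norm ((A (w+\<tau>) - A w) ** T w s) \<le> c*(\<epsilon>*(2*N1))"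
          using mmb per S1[OF w1] by blast
        ultimately show "norm (A (w+\<tau>) ** T (w+\<tau>) (s+\<tau>) - A w ** T w s) \<le> c*(M*S) + c*(\<epsilon>*(2*N1))"
          unfolding eq by (meson add_mono norm_triangle_le)
      qed
      moreover have "(c*(M*S) + c*(\<epsilon>*(2*N1))) * \<bar>v - s\<bar> \<le> (c*(M*S) + c*(\<epsilon>*(2*N1))) * h"
        using v c1 M S0 eps N1 by (intro mult_left_mono) (auto simp: abs_le_iff)
      moreover have "(c*(M*S) + c*(\<epsilon>*(2*N1))) * h = S/2 + c*(\<epsilon>*(2*N1))*h"
        using cMh by (simp add: algebra_simps)
      moreover have "D s s = 0" by (simp add: D_def Tid)
      ultimately have "norm (D v s) \<le> c*(\<epsilon>*(2*N1))*h + S/2" by simp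
      then show "norm (T (v+\<tau>) (s+\<tau>) - T (v+0) s) \<le> c*(\<epsilon>*(2*N1))*h + S/2"
        by (simp add: D_def)
    qed
    moreover have "v \<in> {s-h..s+h}" using v by (auto simp: abs_le_iff)
    ultimately show "norm (D v s) \<le> 2*(c*(\<epsilon>*(2*N1))*h)" by (simp add: D_def)
  qed
  define B1 where "B1 = 2*(c*(2*N1)*h)"
  have D1': "\<And>s v. \<bar>v - s\<bar> \<le> h \<Longrightarrow> norm (D v s) \<le> B1*\<epsilon>"
    using D1 by (simp add: B1_def algebra_simps)
  have Ddec: "\<And>r m s. D r s = D r m ** T (m+\<tau>) (s+\<tau>) + T r m ** D m s"
  proof -
    fix r m s
    have "D r s = T (r+\<tau>) (m+\<tau>) ** T (m+\<tau>) (s+\<tau>) - T r m ** T m s"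
      by (simp add: D_def Tcomp)
    then show "D r s = D r m ** T (m+\<tau>) (s+\<tau>) + T r m ** D m s"
      by (simp add: D_def mat_diff_ld mat_diff_rd)
  qed
  have D2: "\<And>k::nat. \<exists>B. \<forall>r s. \<bar>r - s\<bar> \<le> (real k + 1)*h \<longrightarrow> norm (D r s) \<le> B*\<epsilon>"
  proof -
    fix k :: nat
    show "\<exists>B. \<forall>r s. \<bar>r - s\<bar> \<le> (real k + 1)*h \<longrightarrow> norm (D r s) \<le> B*\<epsilon>"
    proof (induction k)
      case 0 show ?case using D1' by (intro exI[of _ B1]) auto
    next
      case (Suc k)
      then obtain B where B: "\<And>r s. \<bar>r - s\<bar> \<le> (real k + 1)*h \<Longrightarrow> norm (D r s) \<le> B*\<epsilon>" by blast
      obtain Ck where Ck: "\<And>r s. \<bar>r - s\<bar> \<le> (real k + 1)*h \<Longrightarrow> norm (T r s) \<le> Ck" using S2 by blast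
      show ?case
      proof (intro exI[of _ "c*(B*(2*N1)) + c*(Ck*B1)"] allI impI)
        fix r s assume rs: "\<bar>r - s\<bar> \<le> (real (Suc k) + 1)*h"
        define m where "m = s + (r-s)/(real k+2)"
        have "m - s = (r-s)/(real k+2)" by (simp add: m_def)
        then have "\<bar>m - s\<bar> = \<bar>r-s\<bar>/(real k+2)" by simp
        also have "\<dots> \<le> ((real k+2)*h)/(real k+2)"
          using rs by (intro divide_right_mono) (auto simp: add.commute)
        finally have ms: "\<bar>m - s\<bar> \<le> h" by simp
        have "r - m = (r-s)*((real k+1)/(real k+2))" by (simp add: m_def field_simps)
        then have "\<bar>r - m\<bar> = \<bar>r-s\<bar>*((real k+1)/(real k+2))" by (simp add: abs_mult)
        also have "\<dots> \<le> ((real k+2)*h)*((real k+1)/(real k+2))"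
          using rs by (intro mult_right_mono) (auto simp: add.commute)
        also have "\<dots> = (real k+1)*h" by (simp add: field_simps)
        finally have rm: "\<bar>r - m\<bar> \<le> (real k + 1)*h" .
        have ms': "\<bar>(m+\<tau>) - (s+\<tau>)\<bar> \<le> h" using ms by simp
        have "norm (D r m ** T (m+\<tau>) (s+\<tau>)) \<le> c*((B*\<epsilon>)*(2*N1))"
          using mmb B[OF rm] S1[OF ms'] by blast
        moreover have "norm (T r m ** D m s) \<le> c*(Ck*(B1*\<epsilon>))"
          using mmb Ck[OF rm] D1'[OF ms] by blast
        ultimately have "norm (D r s) \<le> c*((B*\<epsilon>)*(2*N1)) + c*(Ck*(B1*\<epsilon>))"
          unfolding Ddec[of r s m] by (meson add_mono norm_triangle_le)
        then show "norm (D r s) \<le> (c*(B*(2*N1)) + c*(Ck*B1))*\<epsilon>"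
          by (simp add: algebra_simps)
      qed
    qed
  qed
  have D3: "\<And>L. \<exists>K\<ge>0. \<forall>r s. \<bar>r - s\<bar> \<le> L \<longrightarrow> norm (D r s) \<le> K*\<epsilon>"
  proof -
    fix L :: real
    obtain B where B: "\<forall>r s. \<bar>r - s\<bar> \<le> (real (nat \<lceil>L/h\<rceil>) + 1)*h \<longrightarrow> norm (D r s) \<le> B*\<epsilon>"
      using D2 by blast
    have "L \<le> (real (nat \<lceil>L/h\<rceil>) + 1)*h"
    proof -
      have "L/h \<le> real (nat \<lceil>L/h\<rceil>) + 1" by linarith
      then show ?thesis using h0 by (simp add: divide_le_eq)
    qed
    then show "\<exists>K\<ge>0. \<forall>r s. \<bar>r - s\<bar> \<le> L \<longrightarrow> norm (D r s) \<le> K*\<epsilon>"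
    proof (intro exI[of _ "max B 0"] conjI allI impI)
      fix r s assume "\<bar>r - s\<bar> \<le> L"
      with \<open>L \<le> _\<close> have "\<bar>r - s\<bar> \<le> (real (nat \<lceil>L/h\<rceil>) + 1)*h" by linarith
      then have "norm (D r s) \<le> B*\<epsilon>" using B by fastforce
      also have "\<dots> \<le> max B 0 * \<epsilon>" using eps by (intro mult_right_mono) auto
      finally show "norm (D r s) \<le> max B 0 * \<epsilon>" .
    qed simp
  qed
  define \<theta> where "\<theta> = (SUP n. t (n+1) - t n)"
  have gap: "\<And>n. t (n+1) - t n \<le> \<theta>"
    unfolding \<theta>_def by (rule cSUP_upper) (use gaps_bdd[OF h2] in auto)
  have th0: "\<theta> \<ge> 0" using gap[of 0] t_mono[of 0] by linarith
  define L where "L = \<theta> + \<epsilon>"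
  obtain C where C0: "C \<ge> 0" and C: "\<And>r s. \<bar>r - s\<bar> \<le> L \<Longrightarrow> norm (T r s) \<le> C"
    using S3[of L] by blast
  obtain K where K0: "K \<ge> 0" and K: "\<And>r s. \<bar>r - s\<bar> \<le> L \<Longrightarrow> norm (D r s) \<le> K*\<epsilon>"
    using D3[of L] by blast
  define E where "E = c*(M*C)"
  have E0: "E \<ge> 0" using c1 M C0 by (simp add: E_def)
  have Lip: "\<And>a b. \<bar>a - b\<bar> \<le> \<epsilon> \<Longrightarrow> norm (T a b - mat 1) \<le> E*\<epsilon>"
  proof -
    fix a b assume ab: "\<bar>a - b\<bar> \<le> \<epsilon>"
    have "norm (T a b - T b b) \<le> E * \<bar>a - b\<bar>"
    proof (rule int_bound[where f="\<lambda>w. A w ** T w b"])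
      show "\<And>x y. x \<le> y \<Longrightarrow> ((\<lambda>w. A w ** T w b) has_integral (T y b - T x b)) {x..y}"
        by (rule Tint)
      show "0 \<le> E" by (rule E0)
      fix w assume "min b a \<le> w" "w \<le> max b a"
      then have "\<bar>w - b\<bar> \<le> L" using ab th0 by (auto simp: L_def abs_le_iff)
      then show "norm (A w ** T w b) \<le> E" unfolding E_def using mmb M(2) C by blast
    qed
    also have "\<dots> \<le> E*\<epsilon>" using ab E0 by (intro mult_left_mono)
    finally show "norm (T a b - mat 1) \<le> E*\<epsilon>" by (simp add: Tid)
  qed
  define Ka where "Ka = c*(E*C) + K"
  define K' where "K' = c*(C*E) + Ka + 1"
  have cEC: "c*(E*C) \<ge> 0" "c*(C*E) \<ge> 0" using c1 E0 C0 by auto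
  have partA: "\<And>n u. u \<in> {t n..t (n+1)} \<Longrightarrow> norm (T (t (n+p+1)) (u + \<tau>) - T (t (n+1)) u) \<le> Ka*\<epsilon>"
  proof -
    fix n u assume u: "u \<in> {t n..t (n+1)}"
    have pa: "\<bar>t (n+p+1) - (t (n+1) + \<tau>)\<bar> \<le> \<epsilon>"
      using pP[of "n+1"] by (simp add: add_ac)
    have g: "t (n+1) - t n \<le> \<theta>" by (rule gap)
    have "T (t (n+p+1)) (u + \<tau>) - T (t (n+1)) u
        = (T (t (n+p+1)) (t (n+1) + \<tau>) - mat 1) ** T (t (n+1) + \<tau>) (u + \<tau>) + D (t (n+1)) u"
      by (simp add: mat_diff_rd Tcomp D_def)
    moreover have "norm ((T (t (n+p+1)) (t (n+1) + \<tau>) - mat 1) ** T (t (n+1) + \<tau>) (u + \<tau>)) \<le> c*((E*\<epsilon>)*C)"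
      using mmb Lip[OF pa] C[of "t (n+1) + \<tau>" "u+\<tau>"] u g eps by (auto simp: L_def abs_le_iff)
    moreover have "norm (D (t (n+1)) u) \<le> K*\<epsilon>"
      using K[of "t (n+1)" u] u g eps by (auto simp: L_def abs_le_iff)
    ultimately have "norm (T (t (n+p+1)) (u + \<tau>) - T (t (n+1)) u) \<le> c*((E*\<epsilon>)*C) + K*\<epsilon>"
      by (metis add_mono norm_triangle_le)
    then show "norm (T (t (n+p+1)) (u + \<tau>) - T (t (n+1)) u) \<le> Ka*\<epsilon>"
      by (simp add: Ka_def algebra_simps)
  qed
  have partB: "\<And>n s. s \<in> {t n..t (n+1)} \<Longrightarrow> norm (T (s + \<tau>) (t (n+p)) - T s (t n)) \<le> (c*(C*E) + K)*\<epsilon>"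
  proof -
    fix n s assume sI: "s \<in> {t n..t (n+1)}"
    have pb: "\<bar>(t n + \<tau>) - t (n+p)\<bar> \<le> \<epsilon>" using pP[of n] by (simp add: abs_minus_commute)
    have g: "t (n+1) - t n \<le> \<theta>" by (rule gap)
    have "T (s + \<tau>) (t (n+p)) - T s (t n)
        = T (s+\<tau>) (t n + \<tau>) ** (T (t n + \<tau>) (t (n+p)) - mat 1) + D s (t n)"
      by (simp add: mat_diff_ld Tcomp D_def)
    moreover have "norm (T (s+\<tau>) (t n + \<tau>) ** (T (t n + \<tau>) (t (n+p)) - mat 1)) \<le> c*(C*(E*\<epsilon>))"
      using mmb Lip[OF pb] C[of "s+\<tau>" "t n + \<tau>"] sI g eps by (auto simp: L_def abs_le_iff)
    moreover have "norm (D s (t n)) \<le> K*\<epsilon>"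
      using K[of s "t n"] sI g eps by (auto simp: L_def abs_le_iff)
    ultimately have "norm (T (s + \<tau>) (t (n+p)) - T s (t n)) \<le> c*(C*(E*\<epsilon>)) + K*\<epsilon>"
      by (metis add_mono norm_triangle_le)
    then show "norm (T (s + \<tau>) (t (n+p)) - T s (t n)) \<le> (c*(C*E) + K)*\<epsilon>"
      by (simp add: algebra_simps)
  qed
  have partD: "\<And>n. norm (T (t (n+p+1)) (t (n+p)) - T (t (n+1)) (t n)) \<le> (c*(C*E) + Ka)*\<epsilon>"
  proof -
    fix n
    have pa: "\<bar>t (n+p+1) - (t (n+1) + \<tau>)\<bar> \<le> \<epsilon>"
      using pP[of "n+1"] by (simp add: add_ac)
    have pb: "\<bar>(t n + \<tau>) - t (n+p)\<bar> \<le> \<epsilon>" using pP[of n] by (simp add: abs_minus_commute)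
    have g: "t (n+1) - t n \<le> \<theta>" by (rule gap)
    have mono: "t n \<le> t (n+1)" using t_mono[of n] by simp
    have "T (t (n+p+1)) (t (n+p)) - T (t (n+1)) (t n)
        = T (t (n+p+1)) (t n + \<tau>) ** (T (t n + \<tau>) (t (n+p)) - mat 1)
          + (T (t (n+p+1)) (t n + \<tau>) - T (t (n+1)) (t n))"
      by (simp add: mat_diff_ld Tcomp)
    moreover have "norm (T (t (n+p+1)) (t n + \<tau>) ** (T (t n + \<tau>) (t (n+p)) - mat 1)) \<le> c*(C*(E*\<epsilon>))"
      using mmb Lip[OF pb] C[of "t (n+p+1)" "t n + \<tau>"] pa g mono eps
      by (auto simp: L_def abs_le_iff)
    moreover have "norm (T (t (n+p+1)) (t n + \<tau>) - T (t (n+1)) (t n)) \<le> Ka*\<epsilon>"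
      using partA[of "t n" n] mono by simp
    ultimately have "norm (T (t (n+p+1)) (t (n+p)) - T (t (n+1)) (t n)) \<le> c*(C*(E*\<epsilon>)) + Ka*\<epsilon>"
      by (metis add_mono norm_triangle_le)
    then show "norm (T (t (n+p+1)) (t (n+p)) - T (t (n+1)) (t n)) \<le> (c*(C*E) + Ka)*\<epsilon>"
      by (simp add: algebra_simps)
  qed
  have K'a: "Ka*\<epsilon> \<le> K'*\<epsilon>" "(c*(C*E) + K)*\<epsilon> \<le> K'*\<epsilon>" "(c*(C*E) + Ka)*\<epsilon> \<le> K'*\<epsilon>" "K*\<epsilon> \<le> K'*\<epsilon>"
  proof -
    have "Ka \<le> K'" "c*(C*E) + K \<le> K'" "c*(C*E) + Ka \<le> K'" "K \<le> K'"
      unfolding K'_def Ka_def using cEC K0 by linarith+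
    then show "Ka*\<epsilon> \<le> K'*\<epsilon>" "(c*(C*E) + K)*\<epsilon> \<le> K'*\<epsilon>" "(c*(C*E) + Ka)*\<epsilon> \<le> K'*\<epsilon>" "K*\<epsilon> \<le> K'*\<epsilon>"
      using eps by (auto intro: mult_right_mono)
  qed
  have K'0: "K' > 0" unfolding K'_def Ka_def using cEC K0 by linarith
  show ?thesis
  proof (intro exI[of _ K'] conjI allI ballI impI K'0)
    fix n u assume "u \<in> {t n..t (n+1)}"
    then show "norm (transition X (t (n+p+1)) (u + \<tau>) - transition X (t (n+1)) u) \<le> K' * \<epsilon>"
      using partA K'a(1) unfolding T_def by (meson order_trans)
  next
    fix n s assume "s \<in> {t n..t (n+1)}"
    then show "norm (transition X (s + \<tau>) (t (n+p)) - transition X s (t n)) \<le> K' * \<epsilon>"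
      using partB K'a(2) unfolding T_def by (meson order_trans)
  next
    fix n
    show "norm (transition X (t (n+p+1)) (t (n+p)) - transition X (t (n+1)) (t n)) \<le> K' * \<epsilon>"
      using partD[of n] K'a(3) unfolding T_def by (meson order_trans)
  next
    fix s r assume "\<bar>r - s\<bar> \<le> (SUP n. t (n+1) - t n)"
    then have "\<bar>r - s\<bar> \<le> L" using eps by (simp add: L_def \<theta>_def)
    then have "norm (D r s) \<le> K*\<epsilon>" by (rule K)
    then show "norm (transition X (r + \<tau>) (s + \<tau>) - transition X r s) \<le> K' * \<epsilon>"
      using K'a(4) unfolding D_def T_def by linarith
  qed
qed
end
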